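(* Let $0\to(M,\alpha_M)\xrightarrow{t}(G,\alpha_G)\xrightarrow{p}(Q,\mathrm{Id}_Q)\to0$ be a split short exact sequence of $\alpha$-perfect Hom-Leibniz algebras with splitting homomorphism $s:(Q,\mathrm{Id}_Q)\to(G,\alpha_G)$, $p\circ s=\mathrm{Id}_Q$. Let $\tau=\mathfrak{uce}_\alpha(t)$, $\pi=\mathfrak{uce}_\alpha(p):\mathfrak{uce}_\alpha(G)\to\mathfrak{uce}(Q)$. Then $\mathrm{Ker}(\pi)$ equals the subspace $\{\alpha_M(M),\alpha_M(M)\}$ of $\mathfrak{uce}_\alpha(G)$ spanned by the classes $\{t(\alpha_M(m_1)),t(\alpha_M(m_2))\}$, $m_1,m_2\in M$, and this subspace equals $\tau(\mathfrak{uce}_\alpha(M))$.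
   Context: Hom-Leibniz algebras are multiplicative: $(L,\alpha_L)$ is a $\mathbb{K}$-vector space with bilinear bracket and linear $\alpha_L$ such that $[\alpha_L(x),[y,z]]=[[x,y],\alpha_L(z)]-[[x,z],\alpha_L(y)]$ and $\alpha_L[x,y]=[\alpha_L(x),\alpha_L(y)]$; homomorphisms preserve brackets and commute with structure maps. $(L,\alpha_L)$ is $\alpha$-perfect if $L=[\alpha_L(L),\alpha_L(L)]$ (so $(Q,\mathrm{Id}_Q)$ is $\alpha$-perfect iff $Q=[Q,Q]$). For $\alpha$-perfect $(L,\alpha_L)$: $I_L\subseteq\alpha_L(L)\otimes\alpha_L(L)$ is spanned by $-[x_1,x_2]\otimes\alpha_L(x_3)+[x_1,x_3]\otimes\alpha_L(x_2)+\alpha_L(x_1)\otimes[x_2,x_3]$; $\mathfrak{uce}_\alpha(L)=(\alpha_L(L)\otimes\alpha_L(L))/I_L$ with classes $\{\alpha_L(x_1),\alpha_L(x_2)\}$, bracket $[\{a,b\},\{c,e\}]=\{[a,b],[c,e]\}$, endomorphism $\overline{\alpha}\{\alpha_L(x_1),\alpha_L(x_2)\}=\{\alpha_L^2(x_1),\alpha_L^2(x_2)\}$. For $\alpha_L=\mathrm{Id}$ this is $\mathfrak{uce}(Q)=(Q\otimes Q)/I_Q$ with identity endomorphism. For a homomorphism $g$ of $\alpha$-perfect algebras, $\mathfrak{uce}_\alpha(g)\{\alpha(x_1),\alpha(x_2)\}=\{\alpha(g(x_1)),\alpha(g(x_2))\}$. *)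

theory Defs
  imports Main "HOL.Vector_Spaces" "HOL-Library.Function_Algebras"
begin

definition hom_leibniz ::
  "('k::field \<Rightarrow> 'v::ab_group_add \<Rightarrow> 'v) \<Rightarrow> ('v \<Rightarrow> 'v \<Rightarrow> 'v) \<Rightarrow> ('v \<Rightarrow> 'v) \<Rightarrow> bool" where
  "hom_leibniz sc br al \<longleftrightarrow>
     vector_space sc \<and>
     (\<forall>x. Vector_Spaces.linear sc sc (br x)) \<and>
     (\<forall>y. Vector_Spaces.linear sc sc (\<lambda>x. br x y)) \<and>
     Vector_Spaces.linear sc sc al \<and>
     (\<forall>x y z. br (al x) (br y z) = br (br x y) (al z) - br (br x z) (al y)) \<and>
     (\<forall>x y. al (br x y) = br (al x) (al y))"

definition hl_hom ::
  "('k::field \<Rightarrow> 'v::ab_group_add \<Rightarrow> 'v) \<Rightarrow> ('v \<Rightarrow> 'v \<Rightarrow> 'v) \<Rightarrow> ('v \<Rightarrow> 'v) \<Rightarrow>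
   ('k \<Rightarrow> 'w::ab_group_add \<Rightarrow> 'w) \<Rightarrow> ('w \<Rightarrow> 'w \<Rightarrow> 'w) \<Rightarrow> ('w \<Rightarrow> 'w) \<Rightarrow> ('v \<Rightarrow> 'w) \<Rightarrow> bool" where
  "hl_hom sc1 br1 al1 sc2 br2 al2 f \<longleftrightarrow>
     Vector_Spaces.linear sc1 sc2 f \<and>
     (\<forall>x y. f (br1 x y) = br2 (f x) (f y)) \<and>
     (\<forall>x. f (al1 x) = al2 (f x))"

definition alpha_perfect ::
  "('k::field \<Rightarrow> 'v::ab_group_add \<Rightarrow> 'v) \<Rightarrow> ('v \<Rightarrow> 'v \<Rightarrow> 'v) \<Rightarrow> ('v \<Rightarrow> 'v) \<Rightarrow> bool" where
  "alpha_perfect sc br al \<longleftrightarrow> module.span sc {br (al x) (al y) | x y. True} = UNIV"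

text \<open>Free K-vector space on pairs: finitely supported functions 'v \<times> 'v \<Rightarrow> 'k,
  with pointwise operations. The tensor product al(L) \<otimes> al(L) is the span of the
  basis vectors delta a b (a, b in al(L)) modulo the bilinearity relations.\<close>

definition fsmult :: "'k::field \<Rightarrow> ('a \<Rightarrow> 'k) \<Rightarrow> ('a \<Rightarrow> 'k)" where
  "fsmult c f = (\<lambda>z. c * f z)"

definition delta :: "'v \<Rightarrow> 'v \<Rightarrow> ('v \<times> 'v \<Rightarrow> 'k::field)" where
  "delta a b = (\<lambda>z. if z = (a, b) then 1 else 0)"

definition free_sp :: "('v \<Rightarrow> 'v) \<Rightarrow> ('v \<times> 'v \<Rightarrow> 'k::field) set" where
  "free_sp al = module.span fsmult {delta (al x) (al y) | x y. True}"

definition bilin_rels ::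
  "('k::field \<Rightarrow> 'v::ab_group_add \<Rightarrow> 'v) \<Rightarrow> ('v \<Rightarrow> 'v) \<Rightarrow> ('v \<times> 'v \<Rightarrow> 'k) set" where
  "bilin_rels sc al =
     {delta (a + a') b - delta a b - delta a' b | a a' b. a \<in> range al \<and> a' \<in> range al \<and> b \<in> range al}
   \<union> {delta a (b + b') - delta a b - delta a b' | a b b'. a \<in> range al \<and> b \<in> range al \<and> b' \<in> range al}
   \<union> {delta (sc c a) b - fsmult c (delta a b) | c a b. a \<in> range al \<and> b \<in> range al}
   \<union> {delta a (sc c b) - fsmult c (delta a b) | c a b. a \<in> range al \<and> b \<in> range al}"

definition IL_gens ::
  "('v::ab_group_add \<Rightarrow> 'v \<Rightarrow> 'v) \<Rightarrow> ('v \<Rightarrow> 'v) \<Rightarrow> ('v \<times> 'v \<Rightarrow> 'k::field) set" where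
  "IL_gens br al =
     {- delta (br x1 x2) (al x3) + delta (br x1 x3) (al x2) + delta (al x1) (br x2 x3) | x1 x2 x3. True}"

text \<open>Kernel of the projection free space \<rightarrow> (al(L) \<otimes> al(L)) / I_L.\<close>
definition uce_rels ::
  "('k::field \<Rightarrow> 'v::ab_group_add \<Rightarrow> 'v) \<Rightarrow> ('v \<Rightarrow> 'v \<Rightarrow> 'v) \<Rightarrow> ('v \<Rightarrow> 'v) \<Rightarrow> ('v \<times> 'v \<Rightarrow> 'k) set" where
  "uce_rels sc br al = module.span fsmult (bilin_rels sc al \<union> IL_gens br al)"

definition uce_class ::
  "('k::field \<Rightarrow> 'v::ab_group_add \<Rightarrow> 'v) \<Rightarrow> ('v \<Rightarrow> 'v \<Rightarrow> 'v) \<Rightarrow> ('v \<Rightarrow> 'v) \<Rightarrow> ('v \<times> 'v \<Rightarrow> 'k)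
     \<Rightarrow> ('v \<times> 'v \<Rightarrow> 'k) set" where
  "uce_class sc br al f = {g. g - f \<in> uce_rels sc br al}"

text \<open>The carrier of uce_alpha(L): the set of classes; its zero is uce_class sc br al 0.\<close>
definition uce ::
  "('k::field \<Rightarrow> 'v::ab_group_add \<Rightarrow> 'v) \<Rightarrow> ('v \<Rightarrow> 'v \<Rightarrow> 'v) \<Rightarrow> ('v \<Rightarrow> 'v) \<Rightarrow> ('v \<times> 'v \<Rightarrow> 'k) set set" where
  "uce sc br al = uce_class sc br al ` free_sp al"

text \<open>Push-forward of free-space elements along g on both tensor factors:
  delta a b \<mapsto> delta (g a) (g b), extended linearly.\<close>
definition push :: "('v \<Rightarrow> 'w) \<Rightarrow> ('v \<times> 'v \<Rightarrow> 'k::field) \<Rightarrow> ('w \<times> 'w \<Rightarrow> 'k)" where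
  "push g f = (\<lambda>(a, b). \<Sum>z\<in>{z. f z \<noteq> 0 \<and> g (fst z) = a \<and> g (snd z) = b}. f z)"

text \<open>uce_alpha(g): {al x1, al x2} \<mapsto> {al (g x1), al (g x2)} = {g (al x1), g (al x2)},
  defined on a class via any representative.\<close>
definition uce_map ::
  "('k::field \<Rightarrow> 'w::ab_group_add \<Rightarrow> 'w) \<Rightarrow> ('w \<Rightarrow> 'w \<Rightarrow> 'w) \<Rightarrow> ('w \<Rightarrow> 'w) \<Rightarrow> ('v \<Rightarrow> 'w)
     \<Rightarrow> ('v \<times> 'v \<Rightarrow> 'k) set \<Rightarrow> ('w \<times> 'w \<Rightarrow> 'k) set" where
  "uce_map sc2 br2 al2 g c = uce_class sc2 br2 al2 (push g (SOME f. f \<in> c))"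

end

theory Submission
  imports Defs
begin


lemma module_fsmult: "module (fsmult :: 'k::field \<Rightarrow> ('a \<Rightarrow> 'k) \<Rightarrow> ('a \<Rightarrow> 'k))"
  unfolding module_def fsmult_def by (auto simp: fun_eq_iff algebra_simps)

interpretation FS: module "fsmult :: 'k::field \<Rightarrow> ('a \<Rightarrow> 'k) \<Rightarrow> ('a \<Rightarrow> 'k)"
  by (rule module_fsmult)

definition fs :: "('a \<Rightarrow> 'k::field) \<Rightarrow> bool" where
  "fs f \<longleftrightarrow> finite {z. f z \<noteq> 0}"

lemma fs_zero[simp]: "fs 0" by (simp add: fs_def)
lemma fs_add: "fs f \<Longrightarrow> fs h \<Longrightarrow> fs (f + h)"
  unfolding fs_def by (rule finite_subset[of _ "{z. f z \<noteq> 0} \<union> {z. h z \<noteq> 0}"]) auto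
lemma fs_neg: "fs f \<Longrightarrow> fs (- f)"
  unfolding fs_def by simp
lemma fs_diff: "fs f \<Longrightarrow> fs h \<Longrightarrow> fs (f - h)"
  unfolding fs_def by (rule finite_subset[of _ "{z. f z \<noteq> 0} \<union> {z. h z \<noteq> 0}"]) auto
lemma fs_smult: "fs f \<Longrightarrow> fs (fsmult c f)"
  unfolding fs_def fsmult_def by (rule finite_subset[of _ "{z. f z \<noteq> 0}"]) auto
lemma fs_delta[simp]: "fs (delta a b)"
  unfolding fs_def delta_def by (rule finite_subset[of _ "{(a,b)}"]) auto

lemma subspace_fs: "FS.subspace {f. fs f}"
  by (rule FS.subspaceI) (auto intro: fs_add fs_smult)

lemma span_fs: "X \<subseteq> {f. fs f} \<Longrightarrow> f \<in> FS.span X \<Longrightarrow> fs f"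
  using FS.span_minimal[OF _ subspace_fs] by blast

lemma push_eq:
  assumes "finite D" "{z. f z \<noteq> 0} \<subseteq> D"
  shows "push g f (a,b) = (\<Sum>z\<in>{z\<in>D. g (fst z) = a \<and> g (snd z) = b}. f z)"
proof -
  have "push g f (a,b) = (\<Sum>z\<in>{z. f z \<noteq> 0 \<and> g (fst z) = a \<and> g (snd z) = b}. f z)"
    unfolding push_def by simp
  also have "\<dots> = (\<Sum>z\<in>{z\<in>D. g (fst z) = a \<and> g (snd z) = b}. f z)"
    by (rule sum.mono_neutral_left) (use assms in auto)
  finally show ?thesis .
qed

lemma push_add: "fs f \<Longrightarrow> fs h \<Longrightarrow> push g (f + h) = push g f + push g h"
proof -
  assume a: "fs f" "fs h"
  let ?D = "{z. f z \<noteq> 0} \<union> {z. h z \<noteq> 0}"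
  have fD: "finite ?D" using a unfolding fs_def by auto
  show ?thesis
  proof (rule ext, clarify)
    fix x y
    have "push g (f + h) (x,y) = (\<Sum>z\<in>{z\<in>?D. g (fst z) = x \<and> g (snd z) = y}. (f+h) z)"
      by (rule push_eq[OF fD]) auto
    moreover have "push g f (x,y) = (\<Sum>z\<in>{z\<in>?D. g (fst z) = x \<and> g (snd z) = y}. f z)"
      by (rule push_eq[OF fD]) auto
    moreover have "push g h (x,y) = (\<Sum>z\<in>{z\<in>?D. g (fst z) = x \<and> g (snd z) = y}. h z)"
      by (rule push_eq[OF fD]) auto
    ultimately show "push g (f + h) (x,y) = (push g f + push g h) (x,y)"
      by (simp add: sum.distrib)
  qed
qed

lemma push_smult: "fs f \<Longrightarrow> push g (fsmult c f) = fsmult c (push g f)"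
proof -
  assume a: "fs f"
  let ?D = "{z. f z \<noteq> 0}"
  have fD: "finite ?D" using a unfolding fs_def by auto
  show ?thesis
  proof (rule ext, clarify)
    fix x y
    have "push g (fsmult c f) (x,y) = (\<Sum>z\<in>{z\<in>?D. g (fst z) = x \<and> g (snd z) = y}. (fsmult c f) z)"
      by (rule push_eq[OF fD]) (auto simp: fsmult_def)
    moreover have "push g f (x,y) = (\<Sum>z\<in>{z\<in>?D. g (fst z) = x \<and> g (snd z) = y}. f z)"
      by (rule push_eq[OF fD]) auto
    ultimately show "push g (fsmult c f) (x,y) = fsmult c (push g f) (x,y)"
      by (simp add: fsmult_def sum_distrib_left)
  qed
qed

lemma push_zero[simp]: "push g 0 = 0"
  unfolding push_def by (simp add: fun_eq_iff)

lemma neg_fsmult: "- f = fsmult (-1) f"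
  by (simp add: fsmult_def fun_eq_iff)

lemma push_neg: "fs f \<Longrightarrow> push g (- f) = - push g f"
proof -
  assume a: "fs f"
  have "push g (-f) = push g (fsmult (-1) f)" by (subst neg_fsmult) (rule refl)
  also have "\<dots> = fsmult (-1) (push g f)" by (rule push_smult[OF a])
  also have "\<dots> = - push g f" by (rule neg_fsmult[symmetric])
  finally show ?thesis .
qed

lemma push_diff: "fs f \<Longrightarrow> fs h \<Longrightarrow> push g (f - h) = push g f - push g h"
  by (metis diff_conv_add_uminus fs_neg push_add push_neg)

lemma push_delta[simp]: "push g (delta a b) = delta (g a) (g b)"
proof (rule ext, clarify)
  fix x y
  have "push g (delta a b) (x,y) = (\<Sum>z\<in>{z\<in>{(a,b)}. g (fst z) = x \<and> g (snd z) = y}. delta a b z)"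
    by (rule push_eq) (auto simp: delta_def)
  also have "\<dots> = (if g a = x \<and> g b = y then 1 else 0)"
  proof (cases "g a = x \<and> g b = y")
    case True
    then have e: "{z\<in>{(a,b)}. g (fst z) = x \<and> g (snd z) = y} = {(a,b)}" by auto
    show ?thesis unfolding e using True by (simp add: delta_def)
  next
    case False
    then have e: "{z\<in>{(a,b)}. g (fst z) = x \<and> g (snd z) = y} = {}" by auto
    show ?thesis unfolding e using False by simp
  qed
  also have "\<dots> = delta (g a) (g b) (x,y)" by (auto simp: delta_def)
  finally show "push g (delta a b) (x,y) = delta (g a) (g b) (x,y)" .
qed

lemma fs_push: "fs f \<Longrightarrow> fs (push g f)"
proof -
  assume a: "fs f"
  have "{w. push g f w \<noteq> 0} \<subseteq> (\<lambda>z. (g (fst z), g (snd z))) ` {z. f z \<noteq> 0}"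
  proof (rule subsetI)
    fix w assume "w \<in> {w. push g f w \<noteq> 0}"
    obtain x y where w: "w = (x,y)" by fastforce
    have "push g f (x,y) \<noteq> 0" using \<open>w \<in> _\<close> w by simp
    have "{z. f z \<noteq> 0 \<and> g (fst z) = x \<and> g (snd z) = y} \<noteq> {}"
    proof (rule notI)
      assume e: "{z. f z \<noteq> 0 \<and> g (fst z) = x \<and> g (snd z) = y} = {}"
      have "push g f (x,y) = 0" unfolding push_def split_conv e by simp
      then show False using \<open>push g f (x,y) \<noteq> 0\<close> by simp
    qed
    then obtain z where "f z \<noteq> 0" "g (fst z) = x" "g (snd z) = y" by blast
    then show "w \<in> (\<lambda>z. (g (fst z), g (snd z))) ` {z. f z \<noteq> 0}"
      unfolding w by (intro image_eqI[of _ _ z]) auto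
  qed
  moreover have "finite ((\<lambda>z. (g (fst z), g (snd z))) ` {z. f z \<noteq> 0})"
    using a unfolding fs_def by simp
  ultimately show ?thesis unfolding fs_def by (rule finite_subset)
qed



lemma lin_add: "Vector_Spaces.linear s1 s2 f \<Longrightarrow> f (x + y) = f x + f y"
  by (simp add: linear_iff)
lemma lin_scale: "Vector_Spaces.linear s1 s2 f \<Longrightarrow> f (s1 c x) = s2 c (f x)"
  by (simp add: linear_iff)
lemma lin_zero: "Vector_Spaces.linear s1 s2 f \<Longrightarrow> f 0 = 0"
  by (metis add.right_neutral add_left_cancel lin_add)
lemma lin_diff: "Vector_Spaces.linear s1 s2 f \<Longrightarrow> f (x - y) = f x - f y"
  by (metis add_diff_cancel_right' diff_add_cancel lin_add)
lemma lin_vs1: "Vector_Spaces.linear s1 s2 f \<Longrightarrow> module s1"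
  by (simp add: linear_iff module_iff_vector_space)
lemma lin_vs2: "Vector_Spaces.linear s1 s2 f \<Longrightarrow> module s2"
  by (simp add: linear_iff module_iff_vector_space)

lemma push_span:
  assumes X: "X \<subseteq> {f. fs f}" and W: "FS.subspace W" and gen: "\<And>x. x \<in> X \<Longrightarrow> push g x \<in> W"
    and f: "f \<in> FS.span X"
  shows "push g f \<in> W"
proof -
  have "FS.subspace {f. fs f \<and> push g f \<in> W}"
  proof (rule FS.subspaceI)
    show "0 \<in> {f. fs f \<and> push g f \<in> W}" using FS.subspace_0[OF W] by simp
  next
    fix x y assume "x \<in> {f. fs f \<and> push g f \<in> W}" "y \<in> {f. fs f \<and> push g f \<in> W}"
    then show "x + y \<in> {f. fs f \<and> push g f \<in> W}"
      using FS.subspace_add[OF W] by (simp add: push_add fs_add)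
  next
    fix c x assume "x \<in> {f. fs f \<and> push g f \<in> W}"
    then show "fsmult c x \<in> {f. fs f \<and> push g f \<in> W}"
      using FS.subspace_scale[OF W] by (simp add: push_smult fs_smult)
  qed
  moreover have "X \<subseteq> {f. fs f \<and> push g f \<in> W}" using X gen by auto
  ultimately show ?thesis using FS.span_minimal f by blast
qed

lemma gens_fs: "bilin_rels sc al \<union> IL_gens br al \<subseteq> {f. fs f}"
  unfolding bilin_rels_def IL_gens_def
  by (auto intro!: fs_diff fs_add fs_neg fs_smult)

lemma rels_fs: "r \<in> uce_rels sc br al \<Longrightarrow> fs r"
  unfolding uce_rels_def by (rule span_fs[OF gens_fs])

lemma class_self: "f \<in> uce_class sc br al f"
  unfolding uce_class_def uce_rels_def by (simp add: FS.span_zero)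

lemma class_eq:
  assumes "f - g \<in> uce_rels sc br al"
  shows "uce_class sc br al f = uce_class sc br al g"
proof -
  have "h - f \<in> uce_rels sc br al \<longleftrightarrow> h - g \<in> uce_rels sc br al" for h
  proof
    assume "h - f \<in> uce_rels sc br al"
    then have "(h - f) + (f - g) \<in> uce_rels sc br al"
      using assms unfolding uce_rels_def by (rule FS.span_add)
    then show "h - g \<in> uce_rels sc br al" by simp
  next
    assume "h - g \<in> uce_rels sc br al"
    then have "(h - g) - (f - g) \<in> uce_rels sc br al"
      using assms unfolding uce_rels_def by (rule FS.span_diff)
    then show "h - f \<in> uce_rels sc br al" by simp
  qed
  then show ?thesis unfolding uce_class_def by blast
qed

lemma class_eqD:
  assumes "uce_class sc br al f = uce_class sc br al g"
  shows "f - g \<in> uce_rels sc br al"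
  using class_self[of f sc br al] assms unfolding uce_class_def by blast

lemma hl_lin: "hl_hom sc1 br1 al1 sc2 br2 al2 g \<Longrightarrow> Vector_Spaces.linear sc1 sc2 g"
  by (simp add: hl_hom_def)
lemma hl_br: "hl_hom sc1 br1 al1 sc2 br2 al2 g \<Longrightarrow> g (br1 x y) = br2 (g x) (g y)"
  by (simp add: hl_hom_def)
lemma hl_al: "hl_hom sc1 br1 al1 sc2 br2 al2 g \<Longrightarrow> g (al1 x) = al2 (g x)"
  by (simp add: hl_hom_def)

lemma push_rels:
  assumes h: "hl_hom sc1 br1 al1 sc2 br2 al2 g" and r: "r \<in> uce_rels sc1 br1 al1"
  shows "push g r \<in> uce_rels sc2 br2 al2"
proof -
  have L: "Vector_Spaces.linear sc1 sc2 g" by (rule hl_lin[OF h])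
  have rng: "a \<in> range al1 \<Longrightarrow> g a \<in> range al2" for a
    using hl_al[OF h] by auto
  have sub: "bilin_rels sc2 al2 \<union> IL_gens br2 al2 \<subseteq> uce_rels sc2 br2 al2"
    unfolding uce_rels_def by (rule FS.span_superset)
  show ?thesis
  proof (rule push_span[OF gens_fs _ _ r[unfolded uce_rels_def]])
    show "FS.subspace (uce_rels sc2 br2 al2)" unfolding uce_rels_def by simp
  next
    fix x assume "x \<in> bilin_rels sc1 al1 \<union> IL_gens br1 al1"
    then consider
      (a1) a a' b where "x = delta (a + a') b - delta a b - delta a' b" "a \<in> range al1" "a' \<in> range al1" "b \<in> range al1"
    | (a2) a b b' where "x = delta a (b + b') - delta a b - delta a b'" "a \<in> range al1" "b \<in> range al1" "b' \<in> range al1"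
    | (a3) c a b where "x = delta (sc1 c a) b - fsmult c (delta a b)" "a \<in> range al1" "b \<in> range al1"
    | (a4) c a b where "x = delta a (sc1 c b) - fsmult c (delta a b)" "a \<in> range al1" "b \<in> range al1"
    | (il) x1 x2 x3 where "x = - delta (br1 x1 x2) (al1 x3) + delta (br1 x1 x3) (al1 x2) + delta (al1 x1) (br1 x2 x3)"
      unfolding bilin_rels_def IL_gens_def by fast
    then show "push g x \<in> uce_rels sc2 br2 al2"
    proof cases
      case a1
      have eq: "push g x = delta (g a + g a') (g b) - delta (g a) (g b) - delta (g a') (g b)"
        unfolding a1(1) by (simp only: push_diff fs_diff fs_delta push_delta lin_add[OF L])
      have r: "g a \<in> range al2" "g a' \<in> range al2" "g b \<in> range al2" using a1 rng by auto
      have "delta (g a + g a') (g b) - delta (g a) (g b) - delta (g a') (g b) \<in> bilin_rels sc2 al2"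
        unfolding bilin_rels_def
        by (rule UnI1, rule UnI1, rule UnI1, rule CollectI, rule exI[of _ "g a"], rule exI[of _ "g a'"],
            rule exI[of _ "g b"]) (simp add: r)
      then show ?thesis unfolding eq by (rule subsetD[OF sub UnI1])
    next
      case a2
      have eq: "push g x = delta (g a) (g b + g b') - delta (g a) (g b) - delta (g a) (g b')"
        unfolding a2(1) by (simp only: push_diff fs_diff fs_delta push_delta lin_add[OF L])
      have r: "g a \<in> range al2" "g b \<in> range al2" "g b' \<in> range al2" using a2 rng by auto
      have "delta (g a) (g b + g b') - delta (g a) (g b) - delta (g a) (g b') \<in> bilin_rels sc2 al2"
        unfolding bilin_rels_def
        by (rule UnI1, rule UnI1, rule UnI2, rule CollectI, rule exI[of _ "g a"], rule exI[of _ "g b"],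
            rule exI[of _ "g b'"]) (simp add: r)
      then show ?thesis unfolding eq by (rule subsetD[OF sub UnI1])
    next
      case a3
      have eq: "push g x = delta (sc2 c (g a)) (g b) - fsmult c (delta (g a) (g b))"
        unfolding a3(1) by (simp only: push_diff fs_diff fs_smult fs_delta push_delta push_smult lin_scale[OF L])
      have r: "g a \<in> range al2" "g b \<in> range al2" using a3 rng by auto
      have "delta (sc2 c (g a)) (g b) - fsmult c (delta (g a) (g b)) \<in> bilin_rels sc2 al2"
        unfolding bilin_rels_def
        by (rule UnI1, rule UnI2, rule CollectI, rule exI[of _ c], rule exI[of _ "g a"],
            rule exI[of _ "g b"]) (simp add: r)
      then show ?thesis unfolding eq by (rule subsetD[OF sub UnI1])
    next
      case a4
      have eq: "push g x = delta (g a) (sc2 c (g b)) - fsmult c (delta (g a) (g b))"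
        unfolding a4(1) by (simp only: push_diff fs_diff fs_smult fs_delta push_delta push_smult lin_scale[OF L])
      have r: "g a \<in> range al2" "g b \<in> range al2" using a4 rng by auto
      have "delta (g a) (sc2 c (g b)) - fsmult c (delta (g a) (g b)) \<in> bilin_rels sc2 al2"
        unfolding bilin_rels_def
        by (rule UnI2, rule CollectI, rule exI[of _ c], rule exI[of _ "g a"],
            rule exI[of _ "g b"]) (simp add: r)
      then show ?thesis unfolding eq by (rule subsetD[OF sub UnI1])
    next
      case il
      have eq: "push g x = - delta (br2 (g x1) (g x2)) (al2 (g x3)) + delta (br2 (g x1) (g x3)) (al2 (g x2)) + delta (al2 (g x1)) (br2 (g x2) (g x3))"
        unfolding il by (simp only: push_add push_neg fs_add fs_neg fs_delta push_delta hl_br[OF h] hl_al[OF h])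
      have "- delta (br2 (g x1) (g x2)) (al2 (g x3)) + delta (br2 (g x1) (g x3)) (al2 (g x2)) + delta (al2 (g x1)) (br2 (g x2) (g x3)) \<in> IL_gens br2 al2"
        unfolding IL_gens_def
        by (rule CollectI, rule exI[of _ "g x1"], rule exI[of _ "g x2"], rule exI[of _ "g x3"]) simp
      then show ?thesis unfolding eq by (rule subsetD[OF sub UnI2])
    qed
  qed
qed

lemma uce_map_class:
  assumes h: "hl_hom sc1 br1 al1 sc2 br2 al2 g" and f: "fs f"
  shows "uce_map sc2 br2 al2 g (uce_class sc1 br1 al1 f) = uce_class sc2 br2 al2 (push g f)"
proof -
  define f' where "f' = (SOME f'. f' \<in> uce_class sc1 br1 al1 f)"
  have "f' \<in> uce_class sc1 br1 al1 f" unfolding f'_def by (rule someI[where x=f], rule class_self)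
  then have r: "f' - f \<in> uce_rels sc1 br1 al1" by (simp add: uce_class_def)
  then have fr: "fs (f' - f)" by (rule rels_fs)
  have e: "f' = f + (f' - f)" by simp
  have "push g f' - push g f = push g (f' - f)"
    by (subst e, simp only: push_add[OF f fr]) simp
  also have "\<dots> \<in> uce_rels sc2 br2 al2" by (rule push_rels[OF h r])
  finally show ?thesis unfolding uce_map_def f'_def[symmetric] by (rule class_eq)
qed

lemma perfect_surj:
  assumes hl: "hom_leibniz sc br al" and pf: "alpha_perfect sc br al"
  shows "surj al"
proof -
  have L: "Vector_Spaces.linear sc sc al" using hl by (simp add: hom_leibniz_def)
  have M: "module sc" by (rule lin_vs1[OF L])
  have "module.subspace sc (range al)"
  proof (rule module.subspaceI[OF M])
    have "0 = al 0" by (simp add: lin_zero[OF L])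
    then show "0 \<in> range al" by blast
    show "x + y \<in> range al" if xy: "x \<in> range al" "y \<in> range al" for x y
    proof -
      obtain u v where "x = al u" "y = al v" using xy by blast
      then have "x + y = al (u + v)" by (simp add: lin_add[OF L])
      then show ?thesis by blast
    qed
    show "sc c x \<in> range al" if xx: "x \<in> range al" for c x
    proof -
      obtain u where "x = al u" using xx by blast
      then have "sc c x = al (sc c u)" by (simp add: lin_scale[OF L])
      then show ?thesis by blast
    qed
  qed
  moreover have "{br (al x) (al y) | x y. True} \<subseteq> range al"
  proof clarify
    fix x y
    have "br (al x) (al y) = al (br x y)" using hl unfolding hom_leibniz_def by simp
    then show "br (al x) (al y) \<in> range al" by blast
  qed
  ultimately have "module.span sc {br (al x) (al y) | x y. True} \<subseteq> range al"
    using module.span_minimal[OF M] by blast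
  then show ?thesis using pf unfolding alpha_perfect_def by blast
qed



lemma bil_in:
  assumes s: "surj al"
  shows "delta (a + a') b - delta a b - delta a' b \<in> bilin_rels sc al"
    and "delta a (b + b') - delta a b - delta a b' \<in> bilin_rels sc al"
    and "delta (sc c a) b - fsmult c (delta a b) \<in> bilin_rels sc al"
    and "delta a (sc c b) - fsmult c (delta a b) \<in> bilin_rels sc al"
  unfolding bilin_rels_def
    apply (rule UnI1, rule UnI1, rule UnI1, rule CollectI, rule exI[of _ a], rule exI[of _ a'], rule exI[of _ b]) apply (simp add: s)
   apply (rule UnI1, rule UnI1, rule UnI2, rule CollectI, rule exI[of _ a], rule exI[of _ b], rule exI[of _ b']) apply (simp add: s)
   apply (rule UnI1, rule UnI2, rule CollectI, rule exI[of _ c], rule exI[of _ a], rule exI[of _ b]) apply (simp add: s)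
  apply (rule UnI2, rule CollectI, rule exI[of _ c], rule exI[of _ a], rule exI[of _ b]) apply (simp add: s)
  done

lemma delta_left_sub:
  assumes M: "module sc" and s: "surj al" and T: "FS.subspace T" and B: "bilin_rels sc al \<subseteq> T"
  shows "module.subspace sc {u. delta u w \<in> T}"
proof (rule module.subspaceI[OF M])
  have "delta (0 + 0) w - delta 0 w - delta 0 w \<in> T" using B bil_in(1)[OF s] by blast
  then have "- (delta (0 + 0) w - delta 0 w - delta 0 w) \<in> T" by (rule FS.subspace_neg[OF T])
  then show "0 \<in> {u. delta u w \<in> T}" by simp
next
  fix x y assume xy: "x \<in> {u. delta u w \<in> T}" "y \<in> {u. delta u w \<in> T}"
  have "delta (x + y) w - delta x w - delta y w \<in> T" using B bil_in(1)[OF s] by blast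
  then have "(delta (x + y) w - delta x w - delta y w) + delta x w + delta y w \<in> T"
    using FS.subspace_add[OF T, OF FS.subspace_add[OF T, OF _ xy(1)[simplified]] xy(2)[simplified]] by blast
  then show "x + y \<in> {u. delta u w \<in> T}" by simp
next
  fix c x assume x: "x \<in> {u. delta u w \<in> T}"
  have "delta (sc c x) w - fsmult c (delta x w) \<in> T" using B bil_in(3)[OF s] by blast
  then have "(delta (sc c x) w - fsmult c (delta x w)) + fsmult c (delta x w) \<in> T"
    using FS.subspace_add[OF T, OF _ FS.subspace_scale[OF T, OF x[simplified]]] by blast
  then show "sc c x \<in> {u. delta u w \<in> T}" by simp
qed

lemma delta_right_sub:
  assumes M: "module sc" and s: "surj al" and T: "FS.subspace T" and B: "bilin_rels sc al \<subseteq> T"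
  shows "module.subspace sc {u. delta w u \<in> T}"
proof (rule module.subspaceI[OF M])
  have "delta w (0 + 0) - delta w 0 - delta w 0 \<in> T" using B bil_in(2)[OF s] by blast
  then have "- (delta w (0 + 0) - delta w 0 - delta w 0) \<in> T" by (rule FS.subspace_neg[OF T])
  then show "0 \<in> {u. delta w u \<in> T}" by simp
next
  fix x y assume xy: "x \<in> {u. delta w u \<in> T}" "y \<in> {u. delta w u \<in> T}"
  have "delta w (x + y) - delta w x - delta w y \<in> T" using B bil_in(2)[OF s] by blast
  then have "(delta w (x + y) - delta w x - delta w y) + delta w x + delta w y \<in> T"
    using FS.subspace_add[OF T, OF FS.subspace_add[OF T, OF _ xy(1)[simplified]] xy(2)[simplified]] by blast
  then show "x + y \<in> {u. delta w u \<in> T}" by simp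
next
  fix c x assume x: "x \<in> {u. delta w u \<in> T}"
  have "delta w (sc c x) - fsmult c (delta w x) \<in> T" using B bil_in(4)[OF s] by blast
  then have "(delta w (sc c x) - fsmult c (delta w x)) + fsmult c (delta w x) \<in> T"
    using FS.subspace_add[OF T, OF _ FS.subspace_scale[OF T, OF x[simplified]]] by blast
  then show "sc c x \<in> {u. delta w u \<in> T}" by simp
qed

lemma vimage_sub:
  assumes L: "Vector_Spaces.linear s1 s2 f" and W: "module.subspace s2 W"
  shows "module.subspace s1 {x. f x \<in> W}"
proof (rule module.subspaceI[OF lin_vs1[OF L]])
  show "0 \<in> {x. f x \<in> W}" using module.subspace_0[OF lin_vs2[OF L] W] lin_zero[OF L] by simp
  show "x + y \<in> {x. f x \<in> W}" if "x \<in> {x. f x \<in> W}" "y \<in> {x. f x \<in> W}" for x y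
    using that module.subspace_add[OF lin_vs2[OF L] W] lin_add[OF L] by simp
  show "s1 c x \<in> {x. f x \<in> W}" if "x \<in> {x. f x \<in> W}" for c x
    using that module.subspace_scale[OF lin_vs2[OF L] W] lin_scale[OF L] by simp
qed

lemma fsmult_diff: "fsmult c (f - h) = fsmult c f - fsmult c h"
  by (simp add: fsmult_def fun_eq_iff algebra_simps)



theorem proposition5p1:
  fixes scM :: "'k::field \<Rightarrow> 'm::ab_group_add \<Rightarrow> 'm" and brM :: "'m \<Rightarrow> 'm \<Rightarrow> 'm" and alM :: "'m \<Rightarrow> 'm"
    and scG :: "'k \<Rightarrow> 'g::ab_group_add \<Rightarrow> 'g" and brG :: "'g \<Rightarrow> 'g \<Rightarrow> 'g" and alG :: "'g \<Rightarrow> 'g"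
    and scQ :: "'k \<Rightarrow> 'q::ab_group_add \<Rightarrow> 'q" and brQ :: "'q \<Rightarrow> 'q \<Rightarrow> 'q"
    and t :: "'m \<Rightarrow> 'g" and p :: "'g \<Rightarrow> 'q" and s :: "'q \<Rightarrow> 'g"
  assumes hlM: "hom_leibniz scM brM alM"
    and hlG: "hom_leibniz scG brG alG"
    and hlQ: "hom_leibniz scQ brQ id"
    and perfM: "alpha_perfect scM brM alM"
    and perfG: "alpha_perfect scG brG alG"
    and perfQ: "alpha_perfect scQ brQ id"
    and t_hom: "hl_hom scM brM alM scG brG alG t"
    and p_hom: "hl_hom scG brG alG scQ brQ id p"
    and t_inj: "inj t"
    and p_surj: "surj p"
    and exact: "range t = {g. p g = 0}"
    and s_hom: "hl_hom scQ brQ id scG brG alG s"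
    and split: "\<And>q. p (s q) = q"
  shows "{c \<in> uce scG brG alG. uce_map scQ brQ id p c = uce_class scQ brQ id 0}
           = uce_class scG brG alG ` module.span fsmult {delta (t (alM m1)) (t (alM m2)) | m1 m2. True}
       \<and> uce_class scG brG alG ` module.span fsmult {delta (t (alM m1)) (t (alM m2)) | m1 m2. True}
           = uce_map scG brG alG t ` uce scM brM alM"
proof -
  have Lt: "Vector_Spaces.linear scM scG t" by (rule hl_lin[OF t_hom])
  have Lp: "Vector_Spaces.linear scG scQ p" by (rule hl_lin[OF p_hom])
  have MM: "module scM" by (rule lin_vs1[OF Lt])
  have MG: "module scG" by (rule lin_vs2[OF Lt])
  have sG: "surj alG" by (rule perfect_surj[OF hlG perfG])
  have sM: "surj alM" by (rule perfect_surj[OF hlM perfM])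
  have brQ0: "brQ 0 y = 0" "brQ y 0 = 0" for y
    using hlQ lin_zero unfolding hom_leibniz_def by blast+
  have pt: "p (t x) = 0" for x using exact by auto
  have alGs: "alG (s q) = s q" for q using hl_al[OF s_hom, of q] by simp
  have palG: "p (alG x) = p x" for x using hl_al[OF p_hom, of x] by simp

  define genS :: "('g \<times> 'g \<Rightarrow> 'k) set" where "genS = {delta (t (alM m1)) (t (alM m2)) | m1 m2. True}"
  define S where "S = FS.span genS"
  define RG where "RG = uce_rels scG brG alG"
  define T where "T = FS.span (genS \<union> (bilin_rels scG alG \<union> IL_gens brG alG))"
  have TS: "FS.subspace T" unfolding T_def by simp
  have genS_T: "genS \<subseteq> T" unfolding T_def by (rule subset_trans[OF _ FS.span_superset]) (rule Un_upper1)
  have bil_T: "bilin_rels scG alG \<subseteq> T" unfolding T_def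
    by (rule subset_trans[OF _ FS.span_superset]) (intro subset_trans[OF _ Un_upper2] Un_upper1)
  have IL_T: "IL_gens brG alG \<subseteq> T" unfolding T_def
    by (rule subset_trans[OF _ FS.span_superset]) (intro subset_trans[OF _ Un_upper2] Un_upper2)
  have RG_T: "RG \<subseteq> T" unfolding RG_def T_def uce_rels_def by (rule FS.span_mono) (rule Un_upper2)
  have T_split: "T = {x + y | x y. x \<in> S \<and> y \<in> RG}"
    unfolding T_def S_def RG_def uce_rels_def by (rule FS.span_Un)

  have K: "delta u v \<in> T" if uv: "p u = 0" "p v = 0" for u v
  proof -
    obtain x y where "u = t x" "v = t y" using uv exact by blast
    moreover obtain x' y' where "x = alM x'" "y = alM y'" using sM by (metis surjD)
    ultimately have "delta u v \<in> genS" unfolding genS_def by blast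
    then show ?thesis using genS_T by blast
  qed
  have ILg: "- delta (brG x1 x2) (alG x3) + delta (brG x1 x3) (alG x2) + delta (alG x1) (brG x2 x3) \<in> T" for x1 x2 x3
    using IL_T unfolding IL_gens_def by blast
  have P1: "delta (brG x1 x2) (alG x3) \<in> T"
    if "delta (brG x1 x3) (alG x2) \<in> T" "delta (alG x1) (brG x2 x3) \<in> T" for x1 x2 x3
  proof -
    have "(delta (brG x1 x3) (alG x2) + delta (alG x1) (brG x2 x3))
          - (- delta (brG x1 x2) (alG x3) + delta (brG x1 x3) (alG x2) + delta (alG x1) (brG x2 x3)) \<in> T"
      using FS.subspace_diff[OF TS FS.subspace_add[OF TS that] ILg] .
    then show ?thesis by (simp add: algebra_simps)
  qed
  have P2: "delta (alG x1) (brG x2 x3) \<in> T"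
    if "delta (brG x1 x2) (alG x3) \<in> T" "delta (brG x1 x3) (alG x2) \<in> T" for x1 x2 x3
  proof -
    have "(- delta (brG x1 x2) (alG x3) + delta (brG x1 x3) (alG x2) + delta (alG x1) (brG x2 x3))
          + (delta (brG x1 x2) (alG x3) - delta (brG x1 x3) (alG x2)) \<in> T"
      using FS.subspace_add[OF TS ILg FS.subspace_diff[OF TS that]] .
    then show ?thesis by (simp add: algebra_simps)
  qed
  have pbr1: "p (brG u v) = 0" if "p u = 0" for u v
    using that brQ0 hl_br[OF p_hom] by simp
  have pbr2: "p (brG v u) = 0" if "p u = 0" for u v
    using that brQ0 hl_br[OF p_hom] by simp

  have spanM: "module.span scM {brM (alM x) (alM y) | x y. True} = UNIV"
    using perfM unfolding alpha_perfect_def .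
  have tbr: "t (brM x y) = brG (t x) (t y)" for x y by (rule hl_br[OF t_hom])
  have talM: "t (alM x) = alG (t x)" for x by (rule hl_al[OF t_hom])

  have Mixed1: "delta u (s q) \<in> T" if pu0: "p u = 0" for u q
  proof -
    obtain m where m: "u = t m" using pu0 exact by blast
    have sub: "module.subspace scM {m. t m \<in> {u. delta u (s q) \<in> T}}"
      by (rule vimage_sub[OF Lt delta_left_sub[OF MG sG TS bil_T]])
    have "{brM (alM x) (alM y) | x y. True} \<subseteq> {m. t m \<in> {u. delta u (s q) \<in> T}}"
    proof clarify
      fix a b
      let ?x1 = "t (alM a)" and ?x2 = "t (alM b)" and ?x3 = "s q"
      have "delta (brG ?x1 ?x2) (alG ?x3) \<in> T"
      proof (rule P1)
        show "delta (brG ?x1 ?x3) (alG ?x2) \<in> T"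
          by (rule K) (simp_all add: pbr1 pt palG)
        show "delta (alG ?x1) (brG ?x2 ?x3) \<in> T"
          by (rule K) (simp_all add: pbr1 pt palG)
      qed
      then show "delta (t (brM (alM a) (alM b))) (s q) \<in> T" by (simp add: tbr alGs)
    qed
    then have "module.span scM {brM (alM x) (alM y) | x y. True} \<subseteq> {m. t m \<in> {u. delta u (s q) \<in> T}}"
      using module.span_minimal[OF MM _ sub] by blast
    then show ?thesis using spanM m by auto
  qed

  have Mixed2: "delta (s q) u \<in> T" if pu0: "p u = 0" for u q
  proof -
    obtain m where m: "u = t m" using pu0 exact by blast
    have sub: "module.subspace scM {m. t m \<in> {u. delta (s q) u \<in> T}}"
      by (rule vimage_sub[OF Lt delta_right_sub[OF MG sG TS bil_T]])
    have "{brM (alM x) (alM y) | x y. True} \<subseteq> {m. t m \<in> {u. delta (s q) u \<in> T}}"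
    proof clarify
      fix a b
      let ?x1 = "s q" and ?x2 = "t (alM a)" and ?x3 = "t (alM b)"
      have "delta (alG ?x1) (brG ?x2 ?x3) \<in> T"
      proof (rule P2)
        show "delta (brG ?x1 ?x2) (alG ?x3) \<in> T"
          by (rule K) (simp_all add: pbr2 pt palG)
        show "delta (brG ?x1 ?x3) (alG ?x2) \<in> T"
          by (rule K) (simp_all add: pbr2 pt palG)
      qed
      then show "delta (s q) (t (brM (alM a) (alM b))) \<in> T" by (simp add: tbr alGs)
    qed
    then have "module.span scM {brM (alM x) (alM y) | x y. True} \<subseteq> {m. t m \<in> {u. delta (s q) u \<in> T}}"
      using module.span_minimal[OF MM _ sub] by blast
    then show ?thesis using spanM m by auto
  qed

  have Decomp: "delta a b - delta (s (p a)) (s (p b)) \<in> T" for a b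
  proof -
    define u where "u = a - s (p a)"
    define v where "v = b - s (p b)"
    define sa where "sa = s (p a)"
    define sb where "sb = s (p b)"
    have pu: "p u = 0" unfolding u_def by (simp add: lin_diff[OF Lp] split)
    have pv: "p v = 0" unfolding v_def by (simp add: lin_diff[OF Lp] split)
    have a: "a = u + sa" and b: "b = v + sb" unfolding u_def v_def sa_def sb_def by simp_all
    have r1: "delta (u + sa) (v + sb) - delta u (v + sb) - delta sa (v + sb) \<in> T"
      using bil_T bil_in(1)[OF sG] by blast
    have r2: "delta u (v + sb) - delta u v - delta u sb \<in> T"
      using bil_T bil_in(2)[OF sG] by blast
    have r3: "delta sa (v + sb) - delta sa v - delta sa sb \<in> T"
      using bil_T bil_in(2)[OF sG] by blast
    have t1: "delta u v \<in> T" by (rule K[OF pu pv])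
    have t2: "delta u sb \<in> T" unfolding sb_def by (rule Mixed1[OF pu])
    have t3: "delta sa v \<in> T" unfolding sa_def by (rule Mixed2[OF pv])
    have "(delta (u + sa) (v + sb) - delta u (v + sb) - delta sa (v + sb))
        + (delta u (v + sb) - delta u v - delta u sb)
        + (delta sa (v + sb) - delta sa v - delta sa sb)
        + delta u v + delta u sb + delta sa v \<in> T"
      by (intro FS.subspace_add[OF TS] r1 r2 r3 t1 t2 t3)
    moreover have "(delta (u + sa) (v + sb) - delta u (v + sb) - delta sa (v + sb))
        + (delta u (v + sb) - delta u v - delta u sb)
        + (delta sa (v + sb) - delta sa v - delta sa sb)
        + delta u v + delta u sb + delta sa v = delta (u + sa) (v + sb) - delta sa sb"
      by (simp add: algebra_simps)
    ultimately have "delta (u + sa) (v + sb) - delta sa sb \<in> T" by simp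
    then have "delta a b - delta sa sb \<in> T" using a b by simp
    then show ?thesis unfolding sa_def sb_def .
  qed

  have gensG_fs: "{delta (alG x) (alG y) | x y. True} \<subseteq> {f :: 'g \<times> 'g \<Rightarrow> 'k. fs f}" by auto
  have freeG_fs: "f \<in> free_sp alG \<Longrightarrow> fs f" for f :: "'g \<times> 'g \<Rightarrow> 'k"
    unfolding free_sp_def by (rule span_fs[OF gensG_fs])
  have TL: "f - push s (push p f) \<in> T" if f: "f \<in> free_sp alG" for f
  proof -
    have W: "FS.subspace {f. fs f \<and> f - push s (push p f) \<in> T}"
    proof (rule FS.subspaceI)
      show "0 \<in> {f. fs f \<and> f - push s (push p f) \<in> T}" using FS.subspace_0[OF TS] by simp
    next
      fix x y assume "x \<in> {f. fs f \<and> f - push s (push p f) \<in> T}" "y \<in> {f. fs f \<and> f - push s (push p f) \<in> T}"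
      then have x: "fs x" "x - push s (push p x) \<in> T" and y: "fs y" "y - push s (push p y) \<in> T" by auto
      have eq: "(x + y) - push s (push p (x + y)) = (x - push s (push p x)) + (y - push s (push p y))"
        using x(1) y(1) by (simp add: push_add fs_push)
      have "(x + y) - push s (push p (x + y)) \<in> T"
        unfolding eq by (rule FS.subspace_add[OF TS x(2) y(2)])
      moreover have "fs (x + y)" by (rule fs_add[OF x(1) y(1)])
      ultimately show "x + y \<in> {f. fs f \<and> f - push s (push p f) \<in> T}" by simp
    next
      fix c x assume "x \<in> {f. fs f \<and> f - push s (push p f) \<in> T}"
      then have x: "fs x" "x - push s (push p x) \<in> T" by auto
      have eq: "fsmult c x - push s (push p (fsmult c x)) = fsmult c (x - push s (push p x))"
        using x(1) by (simp add: push_smult fs_push fsmult_diff)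
      have "fsmult c x - push s (push p (fsmult c x)) \<in> T"
        unfolding eq by (rule FS.subspace_scale[OF TS x(2)])
      moreover have "fs (fsmult c x)" by (rule fs_smult[OF x(1)])
      ultimately show "fsmult c x \<in> {f. fs f \<and> f - push s (push p f) \<in> T}" by simp
    qed
    have "{delta (alG x) (alG y) | x y. True} \<subseteq> {f. fs f \<and> f - push s (push p f) \<in> T}"
      using Decomp by auto
    then have "free_sp alG \<subseteq> {f. fs f \<and> f - push s (push p f) \<in> T}"
      unfolding free_sp_def using FS.span_minimal[OF _ W] by blast
    then show ?thesis using f by blast
  qed

  have RQ0: "delta 0 0 \<in> uce_rels scQ brQ id"
  proof -
    have "delta (0 + 0) 0 - delta 0 0 - delta 0 0 \<in> bilin_rels scQ (id :: 'q \<Rightarrow> 'q)"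
      by (rule bil_in(1)) simp
    then have "delta (0 + 0) 0 - delta 0 0 - delta 0 0 \<in> uce_rels scQ brQ id"
      unfolding uce_rels_def using FS.span_superset by blast
    then have "- (delta (0 + 0) 0 - delta 0 0 - delta 0 0) \<in> uce_rels scQ brQ id"
      unfolding uce_rels_def by (rule FS.span_neg)
    then show ?thesis by simp
  qed
  have genS_fs: "genS \<subseteq> {f. fs f}" unfolding genS_def by auto
  have pS: "push p f \<in> uce_rels scQ brQ id" if "f \<in> S" for f
  proof (rule push_span[OF genS_fs _ _ that[unfolded S_def]])
    show "FS.subspace (uce_rels scQ brQ id)" unfolding uce_rels_def by simp
    fix x assume "x \<in> genS"
    then obtain m1 m2 where "x = delta (t (alM m1)) (t (alM m2))" unfolding genS_def by blast
    then have "push p x = delta 0 0" by (simp add: pt)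
    then show "push p x \<in> uce_rels scQ brQ id" using RQ0 by simp
  qed
  have S_free: "S \<subseteq> free_sp alG"
    unfolding S_def free_sp_def genS_def by (rule FS.span_mono) (auto simp: talM)
  have gensM_fs: "{delta (alM x) (alM y) | x y. True} \<subseteq> {f :: 'm \<times> 'm \<Rightarrow> 'k. fs f}" by auto
  have freeM_fs: "f \<in> free_sp alM \<Longrightarrow> fs f" for f :: "'m \<times> 'm \<Rightarrow> 'k"
    unfolding free_sp_def by (rule span_fs[OF gensM_fs])
  have tS: "push t f \<in> S" if "f \<in> free_sp alM" for f :: "'m \<times> 'm \<Rightarrow> 'k"
  proof (rule push_span[OF gensM_fs _ _ that[unfolded free_sp_def]])
    show "FS.subspace S" unfolding S_def by simp
    fix z :: "'m \<times> 'm \<Rightarrow> 'k" assume "z \<in> {delta (alM x) (alM y) | x y. True}"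
    then obtain a b where "z = delta (alM a) (alM b)" by blast
    then have "push t z = delta (t (alM a)) (t (alM b))" by simp
    moreover have "delta (t (alM a)) (t (alM b)) \<in> genS" unfolding genS_def by blast
    ultimately show "push t z \<in> S" unfolding S_def using FS.span_base by metis
  qed
  define FM :: "('m \<times> 'm \<Rightarrow> 'k) set" where "FM = free_sp alM"
  have FMs: "FS.subspace FM" unfolding FM_def free_sp_def by simp
  have Sim: "\<exists>f\<in>FM. push t f = f1" if f1S: "f1 \<in> S" for f1
  proof -
    have W: "FS.subspace {f1. \<exists>f\<in>FM. push t f = f1}"
    proof (rule FS.subspaceI)
      have "push t 0 = 0" by simp
      then show "0 \<in> {f1. \<exists>f\<in>FM. push t f = f1}"
        using FS.subspace_0[OF FMs] by blast
    next
      fix x y assume "x \<in> {f1. \<exists>f\<in>FM. push t f = f1}" "y \<in> {f1. \<exists>f\<in>FM. push t f = f1}"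
      then obtain fx fy where o: "fx \<in> FM" "fy \<in> FM" "push t fx = x" "push t fy = y" by auto
      have "fx + fy \<in> FM" by (rule FS.subspace_add[OF FMs o(1) o(2)])
      moreover have "push t (fx + fy) = x + y"
        using o freeM_fs push_add unfolding FM_def by metis
      ultimately show "x + y \<in> {f1. \<exists>f\<in>FM. push t f = f1}" by blast
    next
      fix c x assume "x \<in> {f1. \<exists>f\<in>FM. push t f = f1}"
      then obtain fx where o: "fx \<in> FM" "push t fx = x" by auto
      have "fsmult c fx \<in> FM" by (rule FS.subspace_scale[OF FMs o(1)])
      moreover have "push t (fsmult c fx) = fsmult c x"
        using o freeM_fs push_smult unfolding FM_def by metis
      ultimately show "fsmult c x \<in> {f1. \<exists>f\<in>FM. push t f = f1}" by blast
    qed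
    have "genS \<subseteq> {f1. \<exists>f\<in>FM. push t f = f1}"
    proof (rule subsetI)
      fix z assume "z \<in> genS"
      then obtain m1 m2 where z: "z = delta (t (alM m1)) (t (alM m2))" unfolding genS_def by blast
      have "delta (alM m1) (alM m2) \<in> FM" unfolding FM_def free_sp_def
        by (rule FS.span_base) blast
      moreover have "push t (delta (alM m1) (alM m2)) = z" unfolding z by simp
      ultimately show "z \<in> {f1. \<exists>f\<in>FM. push t f = f1}" by blast
    qed
    then have "S \<subseteq> {f1. \<exists>f\<in>FM. push t f = f1}" unfolding S_def by (rule FS.span_minimal[OF _ W])
    then show ?thesis using f1S by blast
  qed

  have C1: "{c \<in> uce scG brG alG. uce_map scQ brQ id p c = uce_class scQ brQ id 0} = uce_class scG brG alG ` S"
  proof (rule set_eqI, rule iffI)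
    fix c assume "c \<in> {c \<in> uce scG brG alG. uce_map scQ brQ id p c = uce_class scQ brQ id 0}"
    then obtain f where f: "f \<in> free_sp alG" "c = uce_class scG brG alG f"
      and k: "uce_map scQ brQ id p c = uce_class scQ brQ id 0" unfolding uce_def by auto
    have "uce_class scQ brQ id (push p f) = uce_class scQ brQ id 0"
      using k f uce_map_class[OF p_hom freeG_fs[OF f(1)]] by simp
    then have "push p f - 0 \<in> uce_rels scQ brQ id" by (rule class_eqD)
    then have "push s (push p f) \<in> RG" unfolding RG_def using push_rels[OF s_hom] by simp
    then have "(f - push s (push p f)) + push s (push p f) \<in> T"
      using FS.subspace_add[OF TS TL[OF f(1)]] RG_T by blast
    then have "f \<in> T" by simp
    then obtain x y where xy: "f = x + y" "x \<in> S" "y \<in> RG" unfolding T_split by blast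
    have "uce_class scG brG alG f = uce_class scG brG alG x"
      by (rule class_eq) (use xy in \<open>simp add: RG_def\<close>)
    then show "c \<in> uce_class scG brG alG ` S" using f xy by blast
  next
    fix c assume "c \<in> uce_class scG brG alG ` S"
    then obtain f where f: "f \<in> S" "c = uce_class scG brG alG f" by blast
    have "c \<in> uce scG brG alG" unfolding uce_def using f S_free by blast
    moreover have "uce_map scQ brQ id p c = uce_class scQ brQ id (push p f)"
      using f uce_map_class[OF p_hom freeG_fs] S_free by blast
    moreover have "uce_class scQ brQ id (push p f) = uce_class scQ brQ id 0"
      by (rule class_eq) (use pS[OF f(1)] in simp)
    ultimately show "c \<in> {c \<in> uce scG brG alG. uce_map scQ brQ id p c = uce_class scQ brQ id 0}"
      by simp
  qed
  have C2: "uce_class scG brG alG ` S = uce_map scG brG alG t ` uce scM brM alM"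
  proof (rule set_eqI, rule iffI)
    fix c assume "c \<in> uce_class scG brG alG ` S"
    then obtain f1 where f1: "f1 \<in> S" "c = uce_class scG brG alG f1" by blast
    obtain f where f: "f \<in> free_sp alM" "push t f = f1" using Sim[OF f1(1)] unfolding FM_def by blast
    have "uce_map scG brG alG t (uce_class scM brM alM f) = c"
      using uce_map_class[OF t_hom freeM_fs[OF f(1)]] f f1 by simp
    moreover have "uce_class scM brM alM f \<in> uce scM brM alM" unfolding uce_def using f by blast
    ultimately show "c \<in> uce_map scG brG alG t ` uce scM brM alM" by blast
  next
    fix c assume "c \<in> uce_map scG brG alG t ` uce scM brM alM"
    then obtain f where f: "f \<in> free_sp alM" "c = uce_map scG brG alG t (uce_class scM brM alM f)"
      unfolding uce_def by blast
    have "c = uce_class scG brG alG (push t f)"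
      using uce_map_class[OF t_hom freeM_fs[OF f(1)]] f by simp
    then show "c \<in> uce_class scG brG alG ` S" using tS[OF f(1)] by blast
  qed
  show ?thesis using C1 C2 unfolding S_def genS_def by simp
qed


end
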